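(* Let $B_J=L+U\in\mathbb R^{n\times n}$ with $\rho(B_J)>0$, where $L$ is strictly lower triangular and $U$ is strictly upper triangular, and suppose $L\ne O$ and $U\ne O$. Then $UL\ne O$ and $LU\ne O$.
   Context: $\rho$ denotes spectral radius. *)

theory Defs
  imports "Jordan_Normal_Form.Spectral_Radius"
begin

definition strictly_lower_tri :: "nat \<Rightarrow> real mat \<Rightarrow> bool" where
  "strictly_lower_tri n A \<longleftrightarrow> A \<in> carrier_mat n n \<and>
     (\<forall>i<n. \<forall>j<n. i \<le> j \<longrightarrow> A $$ (i, j) = 0)"

definition strictly_upper_tri :: "nat \<Rightarrow> real mat \<Rightarrow> bool" where
  "strictly_upper_tri n A \<longleftrightarrow> A \<in> carrier_mat n n \<and>
     (\<forall>i<n. \<forall>j<n. j \<le> i \<longrightarrow> A $$ (i, j) = 0)"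

definition real_spectral_radius :: "real mat \<Rightarrow> real" where
  "real_spectral_radius A = spectral_radius (map_mat complex_of_real A)"

end

theory Submission
  imports Defs
begin

lemma lower_eig_zero:
  fixes M :: "complex mat"
  assumes M: "M \<in> carrier_mat n n" and low: "\<forall>i<n. \<forall>j<n. i \<le> j \<longrightarrow> M$$(i,j) = 0"
    and w: "w \<in> carrier_vec n" and eq: "M *\<^sub>v w = lam \<cdot>\<^sub>v w" and lam: "lam \<noteq> 0"
  shows "w = 0\<^sub>v n"
proof -
  have "\<forall>i. i < n \<longrightarrow> w$i = 0"
  proof (intro allI)
    fix i show "i < n \<longrightarrow> w$i = 0"
    proof (induction i rule: less_induct)
      case (less i)
      show ?case
      proof
        assume i: "i < n"
        have "(M *\<^sub>v w)$i = (\<Sum>j\<in>{0..<n}. M$$(i,j) * w$j)"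
          using M w i by (auto simp: mult_mat_vec_def scalar_prod_def)
        also have "\<dots> = 0"
        proof (rule sum.neutral, intro ballI)
          fix j assume j: "j \<in> {0..<n}"
          show "M$$(i,j) * w$j = 0"
          proof (cases "j < i")
            case True then show ?thesis using less.IH i by auto
          next
            case False then show ?thesis using low i j by auto
          qed
        qed
        finally have "lam * w$i = 0" using eq w i by (metis index_smult_vec(1) carrier_vecD)
        then show "w$i = 0" using lam by simp
      qed
    qed
  qed
  then show ?thesis using w by (intro eq_vecI) auto
qed

lemma upper_eig_zero:
  fixes M :: "complex mat"
  assumes M: "M \<in> carrier_mat n n" and up: "\<forall>i<n. \<forall>j<n. j \<le> i \<longrightarrow> M$$(i,j) = 0"
    and w: "w \<in> carrier_vec n" and eq: "M *\<^sub>v w = lam \<cdot>\<^sub>v w" and lam: "lam \<noteq> 0"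
  shows "w = 0\<^sub>v n"
proof -
  have "\<forall>i. i < n \<longrightarrow> w$i = 0"
  proof (intro allI)
    fix i show "i < n \<longrightarrow> w$i = 0"
    proof (induction "n - i" arbitrary: i rule: less_induct)
      case less
      show ?case
      proof
        assume i: "i < n"
        have "(M *\<^sub>v w)$i = (\<Sum>j\<in>{0..<n}. M$$(i,j) * w$j)"
          using M w i by (auto simp: mult_mat_vec_def scalar_prod_def)
        also have "\<dots> = 0"
        proof (rule sum.neutral, intro ballI)
          fix j assume j: "j \<in> {0..<n}"
          show "M$$(i,j) * w$j = 0"
          proof (cases "i < j")
            case True then show ?thesis using less i j by auto
          next
            case False then show ?thesis using up i j by auto
          qed
        qed
        finally have "lam * w$i = 0" using eq w i by (metis index_smult_vec(1) carrier_vecD)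
        then show "w$i = 0" using lam by simp
      qed
    qed
  qed
  then show ?thesis using w by (intro eq_vecI) auto
qed

lemma mapmult: 
  fixes A B :: "real mat"
  assumes "A \<in> carrier_mat n n" "B \<in> carrier_mat n n"
  shows "map_mat complex_of_real (A * B) = map_mat complex_of_real A * map_mat complex_of_real B"
  using assms by (intro eq_matI) (auto simp: scalar_prod_def)

lemma mapadd: 
  fixes A B :: "real mat"
  assumes "A \<in> carrier_mat n n" "B \<in> carrier_mat n n"
  shows "map_mat complex_of_real (A + B) = map_mat complex_of_real A + map_mat complex_of_real B"
  using assms by (intro eq_matI) auto

lemma key:
  fixes M N :: "complex mat" and v :: "complex vec"
  assumes M: "M \<in> carrier_mat n n" and N: "N \<in> carrier_mat n n"
    and Mz: "\<And>w. w \<in> carrier_vec n \<Longrightarrow> M *\<^sub>v w = ev \<cdot>\<^sub>v w \<Longrightarrow> w = 0\<^sub>v n"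
    and Nz: "\<And>w. w \<in> carrier_vec n \<Longrightarrow> N *\<^sub>v w = ev \<cdot>\<^sub>v w \<Longrightarrow> w = 0\<^sub>v n"
    and MN: "M * N = 0\<^sub>m n n"
    and v: "v \<in> carrier_vec n" and eq: "(N + M) *\<^sub>v v = ev \<cdot>\<^sub>v v"
  shows "v = 0\<^sub>v n"
proof -
  have e1: "(N + M) *\<^sub>v v = N *\<^sub>v v + M *\<^sub>v v" using M N v by (simp add: add_mult_distrib_mat_vec)
  have "M *\<^sub>v ((N + M) *\<^sub>v v) = M *\<^sub>v (N *\<^sub>v v) + M *\<^sub>v (M *\<^sub>v v)"
    using M N v e1 by (simp add: mult_add_distrib_mat_vec)
  also have "M *\<^sub>v (N *\<^sub>v v) = (M * N) *\<^sub>v v" using M N v by simp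
  also have "\<dots> = 0\<^sub>v n" using MN v by (intro eq_vecI) (auto simp: mult_mat_vec_def scalar_prod_def)
  finally have "M *\<^sub>v ((N + M) *\<^sub>v v) = M *\<^sub>v (M *\<^sub>v v)" using M v by simp
  moreover have "M *\<^sub>v ((N + M) *\<^sub>v v) = ev \<cdot>\<^sub>v (M *\<^sub>v v)"
    using eq M v by (simp add: mult_mat_vec)
  ultimately have "M *\<^sub>v (M *\<^sub>v v) = ev \<cdot>\<^sub>v (M *\<^sub>v v)" by simp
  then have Mv: "M *\<^sub>v v = 0\<^sub>v n" using Mz M v by auto
  then have "N *\<^sub>v v = ev \<cdot>\<^sub>v v" using e1 eq N v by simp
  then show ?thesis using Nz v by auto
qed

lemma map_zero_mat: "map_mat complex_of_real (0\<^sub>m n n) = 0\<^sub>m n n"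
  by (intro eq_matI) auto

theorem lemma6p1:
  fixes n :: nat and L U :: "real mat"
  assumes "strictly_lower_tri n L"
    and "strictly_upper_tri n U"
    and "real_spectral_radius (L + U) > 0"
    and "L \<noteq> 0\<^sub>m n n"
    and "U \<noteq> 0\<^sub>m n n"
  shows "U * L \<noteq> 0\<^sub>m n n \<and> L * U \<noteq> 0\<^sub>m n n"
proof -
  have L: "L \<in> carrier_mat n n" and Llow: "\<forall>i<n. \<forall>j<n. i \<le> j \<longrightarrow> L $$ (i, j) = 0"
    using assms(1) unfolding strictly_lower_tri_def by auto
  have U: "U \<in> carrier_mat n n" and Uup: "\<forall>i<n. \<forall>j<n. j \<le> i \<longrightarrow> U $$ (i, j) = 0"
    using assms(2) unfolding strictly_upper_tri_def by auto
  define cL where "cL = map_mat complex_of_real L"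
  define cU where "cU = map_mat complex_of_real U"
  have cL: "cL \<in> carrier_mat n n" and cU: "cU \<in> carrier_mat n n" using L U by (auto simp: cL_def cU_def)
  have n: "n > 0"
  proof (rule ccontr)
    assume "\<not> n > 0" then have "n = 0" by simp
    then have "L = 0\<^sub>m n n" using L by (intro eq_matI) auto
    then show False using assms(4) by simp
  qed
  have A: "map_mat complex_of_real (L + U) = cL + cU" unfolding cL_def cU_def using mapadd[OF L U] .
  have AC: "cL + cU \<in> carrier_mat n n" using cL cU by simp
  obtain ev where ev: "ev \<in> spectrum (cL + cU)" and nev: "norm ev = real_spectral_radius (L + U)"
    using spectral_radius_mem_max(1)[OF AC n] unfolding real_spectral_radius_def A by auto
  have ev0: "ev \<noteq> 0" using nev assms(3) by auto
  from ev obtain v where evec: "eigenvector (cL + cU) v ev"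
    unfolding spectrum_def eigenvalue_def by auto
  then have v: "v \<in> carrier_vec n" and v0: "v \<noteq> 0\<^sub>v n" and eq: "(cL + cU) *\<^sub>v v = ev \<cdot>\<^sub>v v"
    unfolding eigenvector_def using AC by auto
  have Lz: "\<And>w. w \<in> carrier_vec n \<Longrightarrow> cL *\<^sub>v w = ev \<cdot>\<^sub>v w \<Longrightarrow> w = 0\<^sub>v n"
    by (rule lower_eig_zero[OF cL _ _ _ ev0]) (use Llow L in \<open>auto simp: cL_def\<close>)
  have Uz: "\<And>w. w \<in> carrier_vec n \<Longrightarrow> cU *\<^sub>v w = ev \<cdot>\<^sub>v w \<Longrightarrow> w = 0\<^sub>v n"
    by (rule upper_eig_zero[OF cU _ _ _ ev0]) (use Uup U in \<open>auto simp: cU_def\<close>)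
  have comm: "cU + cL = cL + cU" using cL cU by (simp add: comm_add_mat)
  show ?thesis
  proof
    show "U * L \<noteq> 0\<^sub>m n n"
    proof
      assume "U * L = 0\<^sub>m n n"
      then have "cU * cL = 0\<^sub>m n n" using mapmult[OF U L] unfolding cL_def cU_def by (simp add: map_zero_mat)
      from key[OF cU cL Uz Lz this v] eq have "v = 0\<^sub>v n" by simp
      then show False using v0 by simp
    qed
    show "L * U \<noteq> 0\<^sub>m n n"
    proof
      assume "L * U = 0\<^sub>m n n"
      then have "cL * cU = 0\<^sub>m n n" using mapmult[OF L U] unfolding cL_def cU_def by (simp add: map_zero_mat)
      from key[OF cL cU Lz Uz this v] eq comm have "v = 0\<^sub>v n" by simp
      then show False using v0 by simp
    qed
  qed
qed

end
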